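(* Let $k\ge2$ and let $A=\{a_1,\dots,a_n\}$ be a sorted multiset of positive integers ($a_1\le\dots\le a_n$). Then $$\mathrm{OPT}(A)=\min_{k\le j\le n}\mathrm{OPT_L}(A[1,j]).$$
   Context: $[n]=\{1,\dots,n\}$; $\Sigma(S,A)=\sum_{i\in S}a_i$; for pairwise disjoint $S_1,\dots,S_k\subseteq[n]$, $\mathcal{R}(S_1,\dots,S_k,A)=\max_i\Sigma(S_i,A)/\min_i\Sigma(S_i,A)$ if the minimum is positive and $+\infty$ otherwise. $\mathrm{OPT}(A)$ is the minimum of $\mathcal{R}(S_1,\dots,S_k,A)$ over all $k$-tuples of pairwise disjoint subsets of $[n]$ (the $k$-SSR problem). $\mathrm{OPT_L}(A)$ is the minimum over such $k$-tuples additionally satisfying $n\in\bigcup_{i=1}^kS_i$ (the $k$-SSR$_L$ problem: the largest-index element must be used). $A[l,r]$ denotes the sorted multiset consisting of the items $a_i$ with $l\le i\le r$ (re-indexed in order). *)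

theory Defs
  imports Complex_Main "HOL-Library.Extended_Real"
begin

text \<open>Items are a function a :: nat => nat on indices 1..n; a k-tuple of subsets
is a function S :: nat => nat set, only S 1, ..., S k matter.\<close>

definition SigmaS :: "nat set \<Rightarrow> (nat \<Rightarrow> nat) \<Rightarrow> nat" where
  "SigmaS S a = (\<Sum>i\<in>S. a i)"

definition ratioR :: "nat \<Rightarrow> (nat \<Rightarrow> nat set) \<Rightarrow> (nat \<Rightarrow> nat) \<Rightarrow> ereal" where
  "ratioR k S a =
     (if (\<forall>i\<in>{1..k}. SigmaS (S i) a > 0)
      then ereal (real (Max ((\<lambda>i. SigmaS (S i) a) ` {1..k})) /
                  real (Min ((\<lambda>i. SigmaS (S i) a) ` {1..k})))
      else \<infinity>)"

definition valid_tuple :: "nat \<Rightarrow> nat \<Rightarrow> (nat \<Rightarrow> nat set) \<Rightarrow> bool" where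
  "valid_tuple k n S \<longleftrightarrow>
     (\<forall>i\<in>{1..k}. S i \<subseteq> {1..n}) \<and>
     (\<forall>i\<in>{1..k}. \<forall>j\<in>{1..k}. i \<noteq> j \<longrightarrow> S i \<inter> S j = {})"

definition OPT :: "nat \<Rightarrow> nat \<Rightarrow> (nat \<Rightarrow> nat) \<Rightarrow> ereal" where
  "OPT k n a = (INF S \<in> {S. valid_tuple k n S}. ratioR k S a)"

definition OPT_L :: "nat \<Rightarrow> nat \<Rightarrow> (nat \<Rightarrow> nat) \<Rightarrow> ereal" where
  "OPT_L k n a = (INF S \<in> {S. valid_tuple k n S \<and> n \<in> (\<Union>i\<in>{1..k}. S i)}. ratioR k S a)"

end

theory Submission
  imports Defs
begin

theorem lemma25:
  fixes k n :: nat and a :: "nat \<Rightarrow> nat"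
  assumes "k \<ge> 2"
    and "\<forall>i\<in>{1..n}. a i > 0"
    and "\<forall>i j. 1 \<le> i \<longrightarrow> i \<le> j \<longrightarrow> j \<le> n \<longrightarrow> a i \<le> a j"
  shows "OPT k n a = (INF j \<in> {k..n}. OPT_L k j a)"
proof (rule antisym)
  show "OPT k n a \<le> (INF j \<in> {k..n}. OPT_L k j a)"
  proof (rule INF_greatest)
    fix j assume j: "j \<in> {k..n}"
    show "OPT k n a \<le> OPT_L k j a"
      unfolding OPT_def OPT_L_def
    proof (rule INF_superset_mono)
      show "{S. valid_tuple k j S \<and> j \<in> (\<Union>i\<in>{1..k}. S i)} \<subseteq> {S. valid_tuple k n S}"
      proof
        fix S assume "S \<in> {S. valid_tuple k j S \<and> j \<in> (\<Union>i\<in>{1..k}. S i)}"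
        hence "valid_tuple k j S" by simp
        moreover have "{1..j} \<subseteq> {1..n}" using j by auto
        ultimately show "S \<in> {S. valid_tuple k n S}" unfolding valid_tuple_def by blast
      qed
    qed simp
  qed
next
  show "(INF j \<in> {k..n}. OPT_L k j a) \<le> OPT k n a"
    unfolding OPT_def
  proof (rule INF_greatest)
    fix S assume "S \<in> {S. valid_tuple k n S}"
    hence v: "valid_tuple k n S" by simp
    show "(INF j \<in> {k..n}. OPT_L k j a) \<le> ratioR k S a"
    proof (cases "\<forall>i\<in>{1..k}. SigmaS (S i) a > 0")
      case False
      then have "ratioR k S a = \<infinity>" unfolding ratioR_def by (intro if_not_P)
      then show ?thesis by simp
    next
      case True
      have sub: "\<And>i. i \<in> {1..k} \<Longrightarrow> S i \<subseteq> {1..n}" using v unfolding valid_tuple_def by blast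
      have fin: "\<And>i. i \<in> {1..k} \<Longrightarrow> finite (S i)" using sub finite_subset by blast
      have ne: "\<And>i. i \<in> {1..k} \<Longrightarrow> S i \<noteq> {}"
        using True unfolding SigmaS_def by fastforce
      have disj: "\<forall>i\<in>{1..k}. \<forall>j\<in>{1..k}. i \<noteq> j \<longrightarrow> S i \<inter> S j = {}"
        using v unfolding valid_tuple_def by blast
      define U where "U = (\<Union>i\<in>{1..k}. S i)"
      have Usub: "U \<subseteq> {1..n}" using sub unfolding U_def by blast
      have Ufin: "finite U" using Usub finite_subset by blast
      have "S 1 \<noteq> {}" using ne assms(1) by simp
      hence Une: "U \<noteq> {}" using assms(1) unfolding U_def by fastforce
      define j where "j = Max U"
      have jU: "j \<in> U" using Ufin Une unfolding j_def by simp
      have jn: "j \<le> n" using jU Usub by auto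
      have Uj: "U \<subseteq> {1..j}" using Usub Ufin unfolding j_def by auto
      have "card U = (\<Sum>i\<in>{1..k}. card (S i))"
        unfolding U_def using fin disj by (subst card_UN_disjoint) auto
      also have "\<dots> \<ge> (\<Sum>i\<in>{1..k}. 1)"
        by (rule sum_mono) (use ne fin in \<open>auto simp: Suc_le_eq card_gt_0_iff\<close>)
      finally have "k \<le> card U" by simp
      also have "card U \<le> j" using card_mono[OF _ Uj] by simp
      finally have kj: "k \<le> j" .
      have vj: "valid_tuple k j S \<and> j \<in> (\<Union>i\<in>{1..k}. S i)"
        using Uj jU disj unfolding valid_tuple_def U_def by blast
      have "(INF j \<in> {k..n}. OPT_L k j a) \<le> OPT_L k j a"
        by (rule INF_lower) (use kj jn in auto)
      also have "\<dots> \<le> ratioR k S a"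
        unfolding OPT_L_def by (rule INF_lower) (use vj in simp)
      finally show ?thesis .
    qed
  qed
qed

end
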